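(* In the backward-propagation task model described in the context, suppose the computing tasks are executed in the order $E_R^{(L)},\dots,E_1^{(L)},AT_R^{(L)},\dots,AT_1^{(L)},E_R^{(L-1)},\dots,AT_1^{(L-1)},\dots,AT_1^{(1)}$ and the A2A communication tasks in the order $C_R^{(L)},\dots,C_1^{(L)},D_R^{(L)},\dots,D_1^{(L)},C_R^{(L-1)},\dots,D_1^{(L-1)},\dots,D_1^{(1)}$, and that the all-reduce communication is performed with the chunk-based priority scheduling mechanism with chunk size $S_p$. If communicating an all-reduce tensor chunk incurs no startup overhead, then the time per iteration is minimized as $S_p\to 0$.
   Context: Backward-propagation task model for one training iteration of a distributed Mixture-of-Experts transformer with $L$ transformer blocks, each with an MHA layer plus gating function and an MoE layer, whose input is split into $R$ equal parts. For block $l$ and $1\le r\le R$: $AT_r^{(l)}$ (MHA+gating computing subtask), $E_r^{(l)}$ (expert computing subtask), $D_r^{(l)}$ (dispatch all-to-all (A2A) communication subtask), $C_r^{(l)}$ (combine A2A communication subtask), and an all-reduce communication of the gradient tensor of the MHA and gating parameters of block $l$. Tasks of the same type have equal durations. There is one computing resource and one communication resource; a computing and a communication task may run simultaneously, but not two of the same kind; tasks are non-preemptive. Dependencies: $C_r^{(l-1)}$ starts after $AT_r^{(l)}$ finishes ($1<l\le L$); $E_r^{(l)}$ after $C_r^{(l)}$; $D_r^{(l)}$ after $E_r^{(l)}$; $AT_r^{(l)}$ after $D_r^{(l)}$; the all-reduce of block $l$ can start only after all $AT_r^{(l)}$ ($1\le r\le R$) finish. Chunk-based priority scheduling: the all-reduce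 gradient tensor of each block is partitioned into chunks of size $S_p$, each communicated as a separate (non-preemptive) communication task with duration proportional to its size; all pending A2A tasks and all-reduce chunks are kept in a communication pool in which A2A tasks have strictly higher priority than all-reduce chunks, i.e. an all-reduce chunk is started on the communication resource only when no A2A task is ready to execute. *)

theory Defs
  imports Complex_Main
begin

text \<open>
Backward-propagation schedule of one training iteration of a distributed MoE model
with L blocks and R input parts.

Position k (0 \<le> k < 2RL) of the computing order belongs to block
L - k div (2R); within a block, position p = k mod (2R) is E_{R-p} for p < R and
AT_{2R-p} for p \<ge> R.  Position j of the A2A order is likewise C_{R-p} for p < R and
D_{2R-p} for p \<ge> R.  With this indexing the dependencies of the task model read:
computing task k depends exactly on A2A task k (E_r after C_r, AT_r after D_r, same block),
and A2A task j (j \<ge> R) depends exactly on computing task j - R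
(C_r^{(l-1)} after AT_r^{(l)}, D_r after E_r); A2A tasks j < R (the C_r^{(L)}) have no
predecessor.  The all-reduce of the block with block index i (i = 0 is block L) is
released when computing task 2R(i+1)-1 (i.e. AT_1 of that block) finishes.

All-reduce: each block's gradient tensor has size M and is communicated at time
beta per unit size (no startup overhead).  With chunk size S it is cut into
nat \<lceil>M/S\<rceil> chunks, each of size S except the last (the remainder).  Chunks are
queued FIFO (block by block in release order, within a block in order).
\<close>

definition a2a_dur :: "nat \<Rightarrow> real \<Rightarrow> real \<Rightarrow> nat \<Rightarrow> real" where
  "a2a_dur R tC tD j = (if j mod (2*R) < R then tC else tD)"

definition comp_dur :: "nat \<Rightarrow> real \<Rightarrow> real \<Rightarrow> nat \<Rightarrow> real" where
  "comp_dur R tE tAT k = (if k mod (2*R) < R then tE else tAT)"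

definition nchunks :: "real \<Rightarrow> real \<Rightarrow> nat" where
  "nchunks M S = nat \<lceil>M / S\<rceil>"

text \<open>duration of the m-th chunk in the global FIFO chunk stream\<close>
definition chunk_dur :: "real \<Rightarrow> real \<Rightarrow> real \<Rightarrow> nat \<Rightarrow> real" where
  "chunk_dur beta M S m = beta * min S (M - real (m mod nchunks M S) * S)"

text \<open>
Priority gap filling on the communication resource before the next A2A task.
The resource is free at time t, chunks 0..<m have been sent, the next A2A task is
ready at time r.  An A2A task that is ready is always started; otherwise the next
pending released chunk (release time rel m, only if avail m) is started
(non-preemptively); otherwise the resource idles.  Returns the start time of the
A2A task and the new number of sent chunks.
\<close>
function fill :: "(nat \<Rightarrow> real) \<Rightarrow> (nat \<Rightarrow> bool) \<Rightarrow> (nat \<Rightarrow> real) \<Rightarrow> nat \<Rightarrow> real \<Rightarrow> nat \<Rightarrow> real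
    \<Rightarrow> real \<times> nat" where
  "fill rel avail dur tot t m r =
     (if tot \<le> m \<or> \<not> avail m then (max t r, m)
      else (let s = max t (rel m) in
            if r \<le> s then (max t r, m)
            else fill rel avail dur tot (s + dur m) (Suc m) r))"
  by pat_completeness auto
termination
  by (relation "measure (\<lambda>(rel, avail, dur, tot, t, m, r). tot - m)") auto

text \<open>After the last A2A task: send all remaining chunks greedily; returns finish time.\<close>
function drain :: "(nat \<Rightarrow> real) \<Rightarrow> (nat \<Rightarrow> real) \<Rightarrow> nat \<Rightarrow> real \<Rightarrow> nat \<Rightarrow> real" where
  "drain rel dur tot t m =
     (if tot \<le> m then t else drain rel dur tot (max t (rel m) + dur m) (Suc m))"
  by pat_completeness auto
termination
  by (relation "measure (\<lambda>(rel, dur, tot, t, m). tot - m)") auto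

text \<open>
hist ... j = list of (finish time of A2A task i, finish time of computing task i,
number of chunks sent before A2A task i started) for i < j.
\<close>
fun hist :: "nat \<Rightarrow> nat \<Rightarrow> real \<Rightarrow> real \<Rightarrow> real \<Rightarrow> real \<Rightarrow> real \<Rightarrow> real \<Rightarrow> real \<Rightarrow> nat
    \<Rightarrow> (real \<times> real \<times> nat) list" where
  "hist L R tAT tE tD tC beta M S 0 = []"
| "hist L R tAT tE tD tC beta M S (Suc j) =
     (let h = hist L R tAT tE tD tC beta M S j;
          n = nchunks M S;
          t0 = (if j = 0 then 0 else fst (h ! (j - 1)));
          m0 = (if j = 0 then 0 else snd (snd (h ! (j - 1))));
          cprev = (if j = 0 then 0 else fst (snd (h ! (j - 1))));
          r = (if j < R then 0 else fst (snd (h ! (j - R))));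
          rel = (\<lambda>m. fst (snd (h ! (2*R*(m div n + 1) - 1))));
          avail = (\<lambda>m. 2*R*(m div n + 1) - 1 < j);
          (s, m1) = fill rel avail (chunk_dur beta M S) (L * n) t0 m0 r;
          af = s + a2a_dur R tC tD j;
          cf = max cprev af + comp_dur R tE tAT j
      in h @ [(af, cf, m1)])"

definition iter_time :: "nat \<Rightarrow> nat \<Rightarrow> real \<Rightarrow> real \<Rightarrow> real \<Rightarrow> real \<Rightarrow> real \<Rightarrow> real \<Rightarrow> real \<Rightarrow> real" where
  "iter_time L R tAT tE tD tC beta M S =
     (let N = 2*R*L;
          h = hist L R tAT tE tD tC beta M S N;
          n = nchunks M S;
          rel = (\<lambda>m. fst (snd (h ! (2*R*(m div n + 1) - 1))));
          fin = drain rel (chunk_dur beta M S) (L * n) (fst (h ! (N - 1))) (snd (snd (h ! (N - 1))))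
      in max (fst (snd (h ! (N - 1)))) fin)"

end

theory Submission
  imports Defs
begin


declare fill.simps[simp del] drain.simps[simp del]

lemma fill_cong:
  assumes "\<And>m. avail m \<Longrightarrow> rel m = rel' m"
  shows "fill rel avail dur tot t m r = fill rel' avail dur tot t m r"
  using assms
proof (induction rel avail dur tot t m r rule: fill.induct)
  case (1 rel avail dur tot t m r)
  show ?case
    apply (subst (1 2) fill.simps)
    using 1 by (simp add: Let_def)
qed

lemma drain_cong:
  assumes "\<And>m. m < tot \<Longrightarrow> rel m = rel' m"
  shows "drain rel dur tot t m = drain rel' dur tot t m"
  using assms
proof (induction rel dur tot t m rule: drain.induct)
  case (1 rel dur tot t m)
  show ?case
    apply (subst (1 2) drain.simps)
    using 1 by simp
qed

lemma fill_ge: "max t r \<le> fst (fill rel avail dur tot t m r)"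
proof (induction rel avail dur tot t m r rule: fill.induct)
  case (1 rel avail dur tot t m r)
  show ?case
    apply (subst fill.simps)
    using 1 by (auto simp add: Let_def)
qed

lemma fill_le:
  assumes "\<And>m. dur m \<le> D" "0 \<le> D"
  shows "fst (fill rel avail dur tot t m r) \<le> max t (r + D)"
  using assms
proof (induction rel avail dur tot t m r rule: fill.induct)
  case (1 rel avail dur tot t m r)
  show ?case
  proof (cases "tot \<le> m \<or> \<not> avail m \<or> r \<le> max t (rel m)")
    case True
    then show ?thesis using 1(2,3) by (subst fill.simps) (auto simp add: Let_def)
  next
    case False
    then have e: "fill rel avail dur tot t m r = fill rel avail dur tot (max t (rel m) + dur m) (Suc m) r"
      by (subst fill.simps) (auto simp add: Let_def)
    have "fst (fill rel avail dur tot (max t (rel m) + dur m) (Suc m) r) \<le> max (max t (rel m) + dur m) (r + D)"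
      using 1(1)[of "max t (rel m)"] False 1(2,3) by (auto simp add: Let_def)
    also have "\<dots> \<le> max t (r + D)" using False 1(2)[of m] by auto
    finally show ?thesis using e by simp
  qed
qed

lemma fill_m_ge: "m \<le> snd (fill rel avail dur tot t m r)"
proof (induction rel avail dur tot t m r rule: fill.induct)
  case (1 rel avail dur tot t m r)
  show ?case
    apply (subst fill.simps)
    using 1 by (auto simp add: Let_def)
qed

lemma step_lo:
  fixes t a d T :: real
  assumes "0 \<le> d"
  shows "max t T + (if T \<le> a then d else 0) \<le> max (max t a + d) T"
  using assms by auto

lemma fill_lo:
  assumes "\<And>m. 0 \<le> dur m" "0 \<le> d"
  shows "max t T + (if T \<le> r then d else 0) + (\<Sum>i\<in>{m..<tot}. if T \<le> rel i then dur i else 0)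
     \<le> max (fst (fill rel avail dur tot t m r) + d) T
        + (\<Sum>i\<in>{snd (fill rel avail dur tot t m r)..<tot}. if T \<le> rel i then dur i else 0)"
  using assms
proof (induction rel avail dur tot t m r rule: fill.induct)
  case (1 rel avail dur tot t m r)
  show ?case
  proof (cases "tot \<le> m \<or> \<not> avail m \<or> r \<le> max t (rel m)")
    case True
    then have e: "fill rel avail dur tot t m r = (max t r, m)"
      by (subst fill.simps) (auto simp add: Let_def)
    show ?thesis unfolding e using step_lo[OF 1(3), of t T r] by simp
  next
    case False
    then have e: "fill rel avail dur tot t m r = fill rel avail dur tot (max t (rel m) + dur m) (Suc m) r"
      by (subst fill.simps) (auto simp add: Let_def)
    have IH: "max (max t (rel m) + dur m) T + (if T \<le> r then d else 0) + (\<Sum>i\<in>{Suc m..<tot}. if T \<le> rel i then dur i else 0)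
     \<le> max (fst (fill rel avail dur tot t m r) + d) T
        + (\<Sum>i\<in>{snd (fill rel avail dur tot t m r)..<tot}. if T \<le> rel i then dur i else 0)"
      unfolding e using 1(1)[of "max t (rel m)"] False 1(2,3) by (auto simp add: Let_def)
    have sp: "(\<Sum>i\<in>{m..<tot}. if T \<le> rel i then dur i else 0) = (if T \<le> rel m then dur m else 0) + (\<Sum>i\<in>{Suc m..<tot}. if T \<le> rel i then dur i else 0)"
      using False by (simp add: sum.atLeast_Suc_lessThan)
    show ?thesis using IH step_lo[where d="dur m" and t=t and T=T and a="rel m"] 1(2)[of m] unfolding sp by linarith
  qed
qed

lemma drain_lo:
  assumes "\<And>m. 0 \<le> dur m"
  shows "max t T + (\<Sum>i\<in>{m..<tot}. if T \<le> rel i then dur i else 0) \<le> max (drain rel dur tot t m) T"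
  using assms
proof (induction rel dur tot t m rule: drain.induct)
  case (1 rel dur tot t m)
  show ?case
  proof (cases "tot \<le> m")
    case True
    then show ?thesis by (subst drain.simps) simp
  next
    case False
    then have e: "drain rel dur tot t m = drain rel dur tot (max t (rel m) + dur m) (Suc m)"
      by (subst drain.simps) simp
    have sp: "(\<Sum>i\<in>{m..<tot}. if T \<le> rel i then dur i else 0) = (if T \<le> rel m then dur m else 0) + (\<Sum>i\<in>{Suc m..<tot}. if T \<le> rel i then dur i else 0)"
      using False by (simp add: sum.atLeast_Suc_lessThan)
    show ?thesis using 1(1)[OF False 1(2)] step_lo[where d="dur m" and t=t and T=T and a="rel m"] 1(2)[of m] unfolding sp e by linarith
  qed
qed

lemma fill_up:
  assumes "fill rel avail dur tot t m r = (s, m1)"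
    and "t + X + (\<Sum>i\<in>{m..<tot}. dur i) \<le> B"
    and "\<And>m'. m \<le> m' \<Longrightarrow> m' < tot \<Longrightarrow> avail m' \<Longrightarrow> rel m' < r \<Longrightarrow> rel m' + X + (\<Sum>i\<in>{m'..<tot}. dur i) \<le> B"
    and "\<And>m'. m \<le> m' \<Longrightarrow> (tot \<le> m' \<or> \<not> avail m' \<or> r \<le> rel m') \<Longrightarrow> r + X + (\<Sum>i\<in>{m'..<tot}. dur i) \<le> B"
  shows "s + X + (\<Sum>i\<in>{m1..<tot}. dur i) \<le> B"
  using assms
proof (induction rel avail dur tot t m r arbitrary: s m1 rule: fill.induct)
  case (1 rel avail dur tot t m r)
  show ?case
  proof (cases "tot \<le> m \<or> \<not> avail m \<or> r \<le> max t (rel m)")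
    case True
    then have e: "fill rel avail dur tot t m r = (max t r, m)"
      by (subst fill.simps) (auto simp add: Let_def)
    then have "s = max t r" "m1 = m" using 1(2) by auto
    note True
    show ?thesis
    proof (cases "t < r")
      case True
      then have "tot \<le> m \<or> \<not> avail m \<or> r \<le> rel m" using \<open>tot \<le> m \<or> \<not> avail m \<or> r \<le> max t (rel m)\<close> by auto
      then show ?thesis using 1(5)[of m] True \<open>s = max t r\<close> \<open>m1 = m\<close> by auto
    next
      case False
      then show ?thesis using 1(3) \<open>s = max t r\<close> \<open>m1 = m\<close> by auto
    qed
  next
    case False
    then have e: "fill rel avail dur tot t m r = fill rel avail dur tot (max t (rel m) + dur m) (Suc m) r"
      by (subst fill.simps) (auto simp add: Let_def)
    have sp: "(\<Sum>i\<in>{m..<tot}. dur i) = dur m + (\<Sum>i\<in>{Suc m..<tot}. dur i)"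
      using False by (simp add: sum.atLeast_Suc_lessThan)
    have inv: "max t (rel m) + dur m + X + (\<Sum>i\<in>{Suc m..<tot}. dur i) \<le> B"
    proof (cases "t < rel m")
      case True
      then show ?thesis using 1(4)[of m] False sp by auto
    next
      case False
      then show ?thesis using 1(3) sp by auto
    qed
    show ?thesis
      apply (rule 1(1)[of "max t (rel m)" s m1])
      using False 1(2) e inv 1(4,5) by (auto simp add: Let_def)
  qed
qed

lemma drain_up:
  assumes "t + (\<Sum>i\<in>{m..<tot}. dur i) \<le> B"
    and "\<And>m'. m \<le> m' \<Longrightarrow> m' < tot \<Longrightarrow> rel m' + (\<Sum>i\<in>{m'..<tot}. dur i) \<le> B"
  shows "drain rel dur tot t m \<le> B"
  using assms
proof (induction rel dur tot t m rule: drain.induct)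
  case (1 rel dur tot t m)
  show ?case
  proof (cases "tot \<le> m")
    case True
    then show ?thesis using 1(2) by (subst drain.simps) simp
  next
    case False
    then have e: "drain rel dur tot t m = drain rel dur tot (max t (rel m) + dur m) (Suc m)"
      by (subst drain.simps) simp
    have sp: "(\<Sum>i\<in>{m..<tot}. dur i) = dur m + (\<Sum>i\<in>{Suc m..<tot}. dur i)"
      using False by (simp add: sum.atLeast_Suc_lessThan)
    have inv: "max t (rel m) + dur m + (\<Sum>i\<in>{Suc m..<tot}. dur i) \<le> B"
      using 1(2) 1(3)[of m] False sp by (cases "t < rel m") auto
    show ?thesis unfolding e
      apply (rule 1(1)[OF False inv])
      using 1(3) by auto
  qed
qed




locale sched =
  fixes L R :: nat and tAT tE tD tC beta M :: real
  assumes L1: "L \<ge> 1" and R1: "R \<ge> 1"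
    and pAT: "tAT > 0" and pE: "tE > 0" and pD: "tD > 0" and pC: "tC > 0"
    and pb: "beta > 0" and pM: "M > 0"
begin

definition "H S j = hist L R tAT tE tD tC beta M S j"
definition "nn S = nchunks M S"
definition "tot S = L * nn S"
definition "NN = 2*R*L"
definition "AF S k = fst (H S (Suc k) ! k)"
definition "CF S k = fst (snd (H S (Suc k) ! k))"
definition "MC S k = snd (snd (H S (Suc k) ! k))"
definition "t0 S j = (if j = 0 then 0 else AF S (j - 1))"
definition "m0 S j = (if j = 0 then 0 else MC S (j - 1))"
definition "cp S j = (if j = 0 then 0 else CF S (j - 1))"
definition "rr S j = (if j < R then 0 else CF S (j - R))"
definition "rho S m = CF S (2*R*(m div nn S + 1) - 1)"
definition "av S j m = (2*R*(m div nn S + 1) - 1 < j)"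
definition "dur S = chunk_dur beta M S"
definition "a2a j = a2a_dur R tC tD j"
definition "cmp j = comp_dur R tE tAT j"
definition "FL S j = fill (rho S) (av S j) (dur S) (tot S) (t0 S j) (m0 S j) (rr S j)"

lemma H_Suc: "\<exists>x. H S (Suc j) = H S j @ [x]"
  unfolding H_def by (simp add: Let_def case_prod_beta)

lemma length_H: "length (H S j) = j"
proof (induction j)
  case 0 then show ?case by (simp add: H_def)
next
  case (Suc j) then show ?case using H_Suc[of S j] by auto
qed

lemma H_nth: "k < j \<Longrightarrow> H S j ! k = H S (Suc k) ! k"
proof (induction j)
  case 0 then show ?case by simp
next
  case (Suc j)
  obtain x where x: "H S (Suc j) = H S j @ [x]" using H_Suc by blast
  show ?case
  proof (cases "k < j")
    case True
    then show ?thesis using Suc x by (simp add: nth_append length_H)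
  next
    case False
    then have "k = j" using Suc by simp
    then show ?thesis by simp
  qed
qed

definition "TUP S j = (let h = H S j; n = nchunks M S;
          t0 = (if j = 0 then 0 else fst (h ! (j - 1)));
          m0 = (if j = 0 then 0 else snd (snd (h ! (j - 1))));
          cprev = (if j = 0 then 0 else fst (snd (h ! (j - 1))));
          r = (if j < R then 0 else fst (snd (h ! (j - R))));
          rel = (\<lambda>m. fst (snd (h ! (2*R*(m div n + 1) - 1))));
          avail = (\<lambda>m. 2*R*(m div n + 1) - 1 < j);
          F = fill rel avail (chunk_dur beta M S) (L * n) t0 m0 r
          in (fst F + a2a_dur R tC tD j, max cprev (fst F + a2a_dur R tC tD j) + comp_dur R tE tAT j, snd F))"

lemma H_Suc_eq: "H S (Suc j) = H S j @ [TUP S j]"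
  unfolding H_def TUP_def hist.simps(2)
  by (simp only: Let_def prod.case_eq_if)

lemma app_last: "length xs = j \<Longrightarrow> (xs @ [x]) ! j = x" by (metis nth_append_length)

lemma H_last_raw: "H S (Suc j) ! j = TUP S j"
  unfolding H_Suc_eq by (rule app_last[OF length_H])

lemma H_last: "H S (Suc j) ! j = (fst (FL S j) + a2a j, max (cp S j) (fst (FL S j) + a2a j) + cmp j, snd (FL S j))"
proof -
  have e1: "(if j = 0 then 0 else fst (H S j ! (j - 1))) = t0 S j"
    unfolding t0_def AF_def using H_nth[of "j-1" j S] by auto
  have e2: "(if j = 0 then 0 else snd (snd (H S j ! (j - 1)))) = m0 S j"
    unfolding m0_def MC_def using H_nth[of "j-1" j S] by auto
  have e3: "(if j = 0 then 0 else fst (snd (H S j ! (j - 1)))) = cp S j"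
    unfolding cp_def CF_def using H_nth[of "j-1" j S] by auto
  have e4: "(if j < R then 0 else fst (snd (H S j ! (j - R)))) = rr S j"
    unfolding rr_def CF_def using H_nth[of "j-R" j S] R1 by auto
  have e5: "fill (\<lambda>m. fst (snd (H S j ! (2*R*(m div nchunks M S + 1) - 1)))) (av S j) (dur S) (tot S) (t0 S j) (m0 S j) (rr S j)
      = FL S j"
    unfolding FL_def
  proof (rule fill_cong)
    fix m assume "av S j m"
    then have "2*R*(m div nchunks M S + 1) - 1 < j" unfolding av_def nn_def .
    from H_nth[OF this, of S] show "fst (snd (H S j ! (2*R*(m div nchunks M S + 1) - 1))) = rho S m"
      unfolding rho_def CF_def nn_def by simp
  qed
  have e5': "fill (\<lambda>m. fst (snd (H S j ! (2*R*(m div nchunks M S + 1) - 1)))) (\<lambda>m. 2*R*(m div nchunks M S + 1) - 1 < j) (chunk_dur beta M S) (L * nchunks M S) (t0 S j) (m0 S j) (rr S j)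
      = FL S j"
    using e5 unfolding av_def dur_def tot_def nn_def .
  show ?thesis
    unfolding H_last_raw TUP_def Let_def e1 e2 e3 e4 e5' a2a_def cmp_def ..
qed

lemma AF_eq: "AF S j = fst (FL S j) + a2a j"
  unfolding AF_def H_last by simp
lemma MC_eq: "MC S j = snd (FL S j)"
  unfolding MC_def H_last by simp
lemma CF_eq: "CF S j = max (cp S j) (AF S j) + cmp j"
  unfolding CF_def AF_eq H_last by simp

end


lemma fill_mtot: "m \<le> tot \<Longrightarrow> snd (fill rel avail dur tot t m r) \<le> tot"
proof (induction rel avail dur tot t m r rule: fill.induct)
  case (1 rel avail dur tot t m r)
  show ?case
    apply (subst fill.simps)
    using 1 by (auto simp add: Let_def)
qed

context sched begin

lemma a2a_pos: "a2a j > 0" unfolding a2a_def a2a_dur_def using pC pD by auto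
lemma cmp_pos: "cmp j > 0" unfolding cmp_def comp_dur_def using pE pAT by auto

lemma nn_pos: assumes "S > 0" shows "nn S \<ge> 1"
proof -
  have "0 < M / S" using pM assms by simp
  then have "0 < \<lceil>M / S\<rceil>" by simp
  then show ?thesis unfolding nn_def nchunks_def by (simp add: Suc_le_eq zero_less_nat_eq)
qed

lemma nn_lt: assumes "S > 0" shows "real (nn S - 1) * S < M"
proof -
  have "real (nn S) < M / S + 1" unfolding nn_def nchunks_def using pM assms
    by (simp add: divide_pos_pos) linarith
  then have "real (nn S) - 1 < M / S" by simp
  then have "(real (nn S) - 1) * S < M" using assms by (simp add: pos_less_divide_eq)
  then show ?thesis using nn_pos[OF assms] by (simp add: of_nat_diff)
qed

lemma nn_ge: assumes "S > 0" shows "M \<le> real (nn S) * S"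
proof -
  have "M / S \<le> real (nn S)" unfolding nn_def nchunks_def by linarith
  then show ?thesis using assms by (simp add: pos_divide_le_eq)
qed

lemma dur_nonneg: assumes "S > 0" shows "0 \<le> dur S m"
proof -
  have "m mod nn S < nn S" using nn_pos[OF assms] by simp
  then have "real (m mod nn S) \<le> real (nn S - 1)" by simp
  then have "real (m mod nn S) * S \<le> real (nn S - 1) * S" using assms by (simp add: mult_right_mono)
  then have "0 \<le> M - real (m mod nn S) * S" using nn_lt[OF assms] by linarith
  then show ?thesis unfolding dur_def chunk_dur_def nn_def[symmetric] using assms pb by simp
qed

lemma dur_le: assumes "S > 0" shows "dur S m \<le> beta * S"
  unfolding dur_def chunk_dur_def using pb by (simp add: mult_left_mono)

lemma min_sum: assumes "S > 0" "k \<le> nn S - 1"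
  shows "(\<Sum>i<k. min S (M - real i * S)) = real k * S"
  using assms(2)
proof (induction k)
  case 0 then show ?case by simp
next
  case (Suc k)
  have "real (Suc k) * S \<le> real (nn S - 1) * S" using Suc(2) assms(1) by (simp add: mult_right_mono)
  then have "S \<le> M - real k * S" using nn_lt[OF assms(1)] by (simp add: algebra_simps)
  then show ?case using Suc by (simp add: algebra_simps)
qed

lemma block_sum: assumes "S > 0" shows "(\<Sum>i<nn S. dur S i) = beta * M"
proof -
  have n1: "nn S \<ge> 1" using nn_pos[OF assms] .
  have md: "\<And>i. i < nn S \<Longrightarrow> i mod nn S = i" by simp
  have "(\<Sum>i<nn S. dur S i) = beta * (\<Sum>i<nn S. min S (M - real i * S))"
    unfolding dur_def chunk_dur_def nn_def[symmetric] by (simp add: sum_distrib_left)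
  moreover have "{..<nn S} = insert (nn S - 1) {..<nn S - 1}" using n1 by auto
  moreover have "(\<Sum>i\<in>insert (nn S - 1) {..<nn S - 1}. min S (M - real i * S))
       = min S (M - real (nn S - 1) * S) + real (nn S - 1) * S"
    using min_sum[OF assms, of "nn S - 1"] by simp
  moreover have "min S (M - real (nn S - 1) * S) = M - real (nn S - 1) * S"
  proof -
    have "M \<le> (real (nn S - 1) + 1) * S" using nn_ge[OF assms] n1 by (simp add: of_nat_diff)
    then show ?thesis by (simp add: algebra_simps)
  qed
  ultimately show ?thesis by simp
qed

lemma dur_mod: "dur S m = dur S (m mod nn S)"
  unfolding dur_def chunk_dur_def nn_def by simp

lemma blocks_sum:
  assumes "S > 0"
  shows "(\<Sum>m<K * nn S. if P (m div nn S) then dur S m else 0) = (\<Sum>b<K. if P b then beta * M else 0)"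
proof (induction K)
  case 0 then show ?case by simp
next
  case (Suc K)
  let ?n = "nn S"
  have n1: "?n \<ge> 1" using nn_pos[OF assms] .
  have split: "{..<Suc K * ?n} = {..<K * ?n} \<union> {K * ?n..<K * ?n + ?n}" by auto
  have "(\<Sum>m\<in>{K * ?n..<K * ?n + ?n}. if P (m div ?n) then dur S m else 0)
      = (\<Sum>i<?n. if P ((K * ?n + i) div ?n) then dur S (K * ?n + i) else 0)"
    by (rule sum.reindex_bij_witness[where j="\<lambda>m. m - K * ?n" and i="\<lambda>i. K * ?n + i"]) auto
  also have "\<dots> = (\<Sum>i<?n. if P K then dur S i else 0)"
  proof (rule sum.cong)
    fix i assume "i \<in> {..<?n}"
    then have "(K * ?n + i) div ?n = K" "(K * ?n + i) mod ?n = i" using n1 by auto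
    then show "(if P ((K * ?n + i) div ?n) then dur S (K * ?n + i) else 0) = (if P K then dur S i else 0)"
      using dur_mod[of S "K * ?n + i"] by simp
  qed simp
  also have "\<dots> = (if P K then beta * M else 0)" using block_sum[OF assms] by simp
  finally have last: "(\<Sum>m\<in>{K * ?n..<K * ?n + ?n}. if P (m div ?n) then dur S m else 0) = (if P K then beta * M else 0)" .
  have "(\<Sum>m<Suc K * ?n. if P (m div ?n) then dur S m else 0)
     = (\<Sum>m<K * ?n. if P (m div ?n) then dur S m else 0) + (\<Sum>m\<in>{K * ?n..<K * ?n + ?n}. if P (m div ?n) then dur S m else 0)"
    unfolding split by (rule sum.union_disjoint) auto
  then show ?case using Suc last by simp
qed

lemma cp_Suc: "cp S (Suc k) = CF S k" unfolding cp_def by simp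
lemma t0_Suc: "t0 S (Suc k) = AF S k" unfolding t0_def by simp
lemma m0_Suc: "m0 S (Suc k) = MC S k" unfolding m0_def by simp

lemma CF_Suc: "CF S k + cmp (Suc k) \<le> CF S (Suc k)"
  using CF_eq[of S "Suc k"] cp_Suc by simp

lemma CF_mono: "i \<le> k \<Longrightarrow> CF S i \<le> CF S k"
proof (induction k)
  case 0 then show ?case by simp
next
  case (Suc k)
  then show ?case using CF_Suc[of S k] cmp_pos[of "Suc k"]
    by (cases "i = Suc k") auto
qed

lemma AF_ge: "max (t0 S j) (rr S j) + a2a j \<le> AF S j"
  using AF_eq fill_ge unfolding FL_def by (metis add_le_cancel_right)

lemma CF_ge_AF: "AF S j + cmp j \<le> CF S j"
  using CF_eq by simp

lemma nonneg: "0 \<le> AF S j \<and> 0 \<le> CF S j"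
proof (induction j rule: less_induct)
  case (less j)
  have "0 \<le> t0 S j" unfolding t0_def using less[of "j-1"] by auto
  then have "0 \<le> AF S j" using AF_ge[of S j] a2a_pos[of j] by linarith
  then show ?case using CF_ge_AF[of S j] cmp_pos[of j] by linarith
qed

lemma CF_nonneg: "0 \<le> CF S j" using nonneg by blast

lemma rr_mono: "i \<le> k \<Longrightarrow> rr S i \<le> rr S k"
  unfolding rr_def using CF_mono CF_nonneg by auto

lemma compare:
  assumes "S > 0"
  shows "AF S k \<le> AF S' k + real (Suc k) * beta * S \<and> CF S k \<le> CF S' k + real (Suc k) * beta * S"
proof (induction k rule: less_induct)
  case (less k)
  let ?d = "\<lambda>k. real (Suc k) * beta * S"
  have bS: "0 \<le> beta * S" using pb assms by simp
  have f1: "fst (FL S k) \<le> max (t0 S k) (rr S k + beta * S)"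
    unfolding FL_def by (rule fill_le[OF dur_le[OF assms] bS])
  have nk: "0 \<le> real k * beta * S" using bS by (simp add: mult.assoc)
  have t: "t0 S k \<le> t0 S' k + real k * beta * S"
  proof (cases k)
    case 0 then show ?thesis using nk by (simp add: t0_def)
  next
    case (Suc k') then show ?thesis using less[of k'] by (simp add: t0_def)
  qed
  have r: "rr S k \<le> rr S' k + real k * beta * S"
  proof (cases "k < R")
    case True then show ?thesis using nk by (simp add: rr_def)
  next
    case False
    then have "k - R < k" using R1 by simp
    then have "CF S (k - R) \<le> CF S' (k - R) + real (Suc (k - R)) * beta * S" using less by blast
    moreover have "real (Suc (k - R)) * beta * S \<le> real k * beta * S"
      using False R1 pb assms by (intro mult_right_mono) auto
    ultimately show ?thesis using False by (simp add: rr_def)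
  qed
  have f2: "max (t0 S' k) (rr S' k) \<le> fst (FL S' k)" unfolding FL_def by (rule fill_ge)
  have kS: "real k * beta * S + beta * S = ?d k" by (simp add: algebra_simps)
  have A: "AF S k \<le> AF S' k + ?d k"
  proof -
    have m1: "t0 S' k \<le> max (t0 S' k) (rr S' k)" "rr S' k \<le> max (t0 S' k) (rr S' k)" by auto
    have "max (t0 S k) (rr S k + beta * S) \<le> max (t0 S' k) (rr S' k) + ?d k"
      apply (rule max.boundedI)
      using t r kS bS m1 by linarith+
    then show ?thesis using f1 f2 unfolding AF_eq by linarith
  qed
  have c: "cp S k \<le> cp S' k + ?d k"
  proof (cases k)
    case 0 then show ?thesis using bS by (simp add: cp_def)
  next
    case (Suc k')
    then have "CF S k' \<le> CF S' k' + ?d k'" using less by blast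
    moreover have "?d k' \<le> ?d k" using Suc pb assms by (intro mult_right_mono) auto
    ultimately show ?thesis using Suc by (simp add: cp_def)
  qed
  have C: "CF S k \<le> CF S' k + ?d k"
  proof -
    have "max (cp S k) (AF S k) \<le> max (cp S' k) (AF S' k) + ?d k"
      apply (rule max.boundedI)
      using A c max.cobounded1[of "cp S' k" "AF S' k"] max.cobounded2[of "AF S' k" "cp S' k"] by linarith+
    then show ?thesis unfolding CF_eq[of S k] CF_eq[of S' k] by linarith
  qed
  show ?case using A C by blast
qed

end


context sched begin

definition "RA j = (\<Sum>k\<in>{j..<NN}. a2a k)"
definition "fin S = drain (rho S) (dur S) (tot S) (AF S (NN - 1)) (MC S (NN - 1))"
definition "iter S = max (CF S (NN - 1)) (fin S)"

lemma NN_pos: "NN \<ge> 1" unfolding NN_def using L1 R1 by simp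

lemma idx_lt: "b < L \<Longrightarrow> 2*R*(b+1) - 1 < NN"
proof -
  assume "b < L"
  then have "b + 1 \<le> L" by simp
  then have "2*R*(b+1) \<le> 2*R*L" by (rule mult_le_mono2)
  moreover have "2*R*(b+1) \<ge> 1" using R1 by simp
  ultimately show ?thesis unfolding NN_def by linarith
qed

lemma idx_mono: "b \<le> b' \<Longrightarrow> 2*R*(b+1) - 1 \<le> 2*R*(b'+1) - 1"
  by (simp add: diff_le_mono)

lemma div_lt: "S > 0 \<Longrightarrow> m < tot S \<Longrightarrow> m div nn S < L"
  unfolding tot_def by (metis less_mult_imp_div_less mult.commute)

lemma iter_eq: "iter_time L R tAT tE tD tC beta M S = iter S"
proof -
  have l: "NN - 1 < NN" using NN_pos by simp
  have h1: "H S NN ! (NN - 1) = H S (Suc (NN - 1)) ! (NN - 1)" using H_nth[OF l] .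
  have d: "drain (\<lambda>m. fst (snd (H S NN ! (2*R*(m div nchunks M S + 1) - 1)))) (dur S) (tot S) (AF S (NN-1)) (MC S (NN-1))
     = fin S"
    unfolding fin_def
  proof (rule drain_cong)
    fix m assume m: "m < tot S"
    have "m div nchunks M S < L"
    proof -
      have "nn S > 0" using m unfolding tot_def by (metis gr0I mult_0_right not_less_zero)
      then show ?thesis using m unfolding tot_def nn_def by (metis less_mult_imp_div_less mult.commute)
    qed
    then have "2*R*(m div nchunks M S + 1) - 1 < NN" by (rule idx_lt)
    from H_nth[OF this, of S] show "fst (snd (H S NN ! (2*R*(m div nchunks M S + 1) - 1))) = rho S m"
      unfolding rho_def CF_def nn_def by simp
  qed
  show ?thesis
    unfolding iter_time_def iter_def Let_def
    using d h1 unfolding H_def[symmetric] NN_def[symmetric] AF_def CF_def MC_def dur_def tot_def nn_def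
    using NN_pos by simp
qed

lemma B_low:
  assumes S: "S > 0"
  shows "T + (\<Sum>k<NN. if T \<le> rr S k then a2a k else 0) + (\<Sum>i<tot S. if T \<le> rho S i then dur S i else 0)
     \<le> max (fin S) T"
proof -
  let ?P = "\<lambda>j. max (t0 S j) T + (\<Sum>k\<in>{j..<NN}. if T \<le> rr S k then a2a k else 0)
      + (\<Sum>i\<in>{m0 S j..<tot S}. if T \<le> rho S i then dur S i else 0) \<le> max (fin S) T"
  have base: "?P NN"
  proof -
    have "t0 S NN = AF S (NN - 1)" "m0 S NN = MC S (NN - 1)" using NN_pos by (auto simp: t0_def m0_def)
    then show ?thesis using drain_lo[OF dur_nonneg[OF S], where t="AF S (NN - 1)" and T=T and m="MC S (NN - 1)" and tot="tot S" and rel="rho S"]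
      unfolding fin_def by simp
  qed
  have step: "?P n" if "0 \<le> n" "n < NN" "?P (Suc n)" for n
  proof -
    have fl: "max (t0 S n) T + (if T \<le> rr S n then a2a n else 0) + (\<Sum>i\<in>{m0 S n..<tot S}. if T \<le> rho S i then dur S i else 0)
     \<le> max (fst (FL S n) + a2a n) T + (\<Sum>i\<in>{snd (FL S n)..<tot S}. if T \<le> rho S i then dur S i else 0)"
      unfolding FL_def by (rule fill_lo[OF dur_nonneg[OF S] less_imp_le[OF a2a_pos]])
    have sp: "(\<Sum>k\<in>{n..<NN}. if T \<le> rr S k then a2a k else 0) = (if T \<le> rr S n then a2a n else 0) + (\<Sum>k\<in>{Suc n..<NN}. if T \<le> rr S k then a2a k else 0)"
      using that(2) by (simp add: sum.atLeast_Suc_lessThan)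
    have "t0 S (Suc n) = fst (FL S n) + a2a n" "m0 S (Suc n) = snd (FL S n)"
      using t0_Suc m0_Suc AF_eq MC_eq by auto
    then show ?thesis using that(3) fl sp by simp
  qed
  have "?P 0" by (rule inc_induct[of 0 NN ?P, OF _ base step]) auto
  then have "max 0 T + (\<Sum>k<NN. if T \<le> rr S k then a2a k else 0) + (\<Sum>i<tot S. if T \<le> rho S i then dur S i else 0)
     \<le> max (fin S) T" by (simp add: t0_def m0_def atLeast0LessThan)
  moreover have "T \<le> max 0 T" by simp
  ultimately show ?thesis by linarith
qed

lemma rr_nonneg: "0 \<le> rr S k" unfolding rr_def using CF_nonneg by auto

lemma rr_le_CF: "k < NN \<Longrightarrow> rr S k \<le> CF S (NN - 1)"
  unfolding rr_def using CF_nonneg CF_mono by auto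

lemma Wcmp:
  assumes SA: "SA > 0" and SB: "SB > 0"
    and kc: "\<And>k. j \<le> k \<Longrightarrow> k < NN \<Longrightarrow> T \<le> rr SB k"
    and bc: "\<And>b. m' div nn SA \<le> b \<Longrightarrow> b < L \<Longrightarrow> T \<le> CF SB (2*R*(b+1) - 1)"
    and TN: "T \<le> CF SB (NN - 1)"
  shows "T + RA j + (\<Sum>i\<in>{m'..<tot SA}. dur SA i) \<le> iter SB"
proof -
  have a: "RA j \<le> (\<Sum>k<NN. if T \<le> rr SB k then a2a k else 0)"
  proof -
    have "RA j = (\<Sum>k\<in>{j..<NN}. if T \<le> rr SB k then a2a k else 0)"
      unfolding RA_def by (rule sum.cong) (auto simp: kc)
    also have "\<dots> \<le> (\<Sum>k<NN. if T \<le> rr SB k then a2a k else 0)"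
      by (rule sum_mono2) (auto simp: less_imp_le[OF a2a_pos])
    finally show ?thesis .
  qed
  have "(\<Sum>i\<in>{m'..<tot SA}. dur SA i) = (\<Sum>i\<in>{m'..<tot SA}. if m' div nn SA \<le> i div nn SA then dur SA i else 0)"
    by (rule sum.cong) (auto simp: div_le_mono)
  also have "\<dots> \<le> (\<Sum>i<tot SA. if m' div nn SA \<le> i div nn SA then dur SA i else 0)"
    by (rule sum_mono2) (auto simp: dur_nonneg[OF SA])
  also have "\<dots> = (\<Sum>b<L. if m' div nn SA \<le> b then beta * M else 0)"
    unfolding tot_def by (rule blocks_sum[OF SA])
  also have "\<dots> \<le> (\<Sum>b<L. if T \<le> CF SB (2*R*(b+1) - 1) then beta * M else 0)"
    by (rule sum_mono) (use bc pb pM in auto)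
  also have "\<dots> = (\<Sum>i<tot SB. if T \<le> rho SB i then dur SB i else 0)"
    unfolding tot_def rho_def by (rule blocks_sum[OF SB, symmetric])
  finally have c: "(\<Sum>i\<in>{m'..<tot SA}. dur SA i) \<le> (\<Sum>i<tot SB. if T \<le> rho SB i then dur SB i else 0)" .
  have "max (fin SB) T \<le> iter SB" unfolding iter_def using TN by auto
  then show ?thesis using B_low[OF SB, of T] a c by linarith
qed

lemma A_up:
  assumes SA: "SA > 0" and SB: "SB > 0"
  shows "iter SA \<le> iter SB + real NN * beta * SA"
proof -
  define \<delta> where "\<delta> = real NN * beta * SA"
  define Bd where "Bd = iter SB + \<delta>"
  have dpos: "0 \<le> \<delta>" unfolding \<delta>_def using pb SA by simp
  have cmpk: "CF SA k \<le> CF SB k + \<delta>" if "k < NN" for k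
  proof -
    have "CF SA k \<le> CF SB k + real (Suc k) * beta * SA" using compare[OF SA] by blast
    moreover have "real (Suc k) * beta * SA \<le> \<delta>" unfolding \<delta>_def
      using that pb SA by (intro mult_right_mono) auto
    ultimately show ?thesis by linarith
  qed
  have rrc: "rr SA j \<le> rr SB j + \<delta>" if "j < NN" for j
    unfolding rr_def using cmpk[of "j - R"] that dpos by auto
  have rhoc: "rho SA m' \<le> CF SB (2*R*(m' div nn SA + 1) - 1) + \<delta>" if "m' div nn SA < L" for m'
    unfolding rho_def using cmpk[OF idx_lt[OF that]] .
  have nnA: "nn SA > 0" using nn_pos[OF SA] by simp
  have divL: "m' div nn SA < L \<Longrightarrow> m' < tot SA" for m'
    unfolding tot_def using nnA by (metis div_less_iff_less_mult mult.commute)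
  have CFidx: "CF SB (2*R*(b+1) - 1) \<le> CF SB (NN - 1)" if "b < L" for b
    using CF_mono idx_lt[OF that] by auto
  have chunk_hyp: "rho SA m' + RA j + (\<Sum>i\<in>{m'..<tot SA}. dur SA i) \<le> Bd"
    if "m' < tot SA" "\<And>k. j \<le> k \<Longrightarrow> k < NN \<Longrightarrow> rho SA m' \<le> rr SB k + \<delta>" for m' j
  proof -
    have ml: "m' div nn SA < L" using div_lt[OF SA that(1)] .
    have "rho SA m' - \<delta> + RA j + (\<Sum>i\<in>{m'..<tot SA}. dur SA i) \<le> iter SB"
    proof (rule Wcmp[OF SA SB])
      show "rho SA m' - \<delta> \<le> rr SB k" if "j \<le> k" "k < NN" for k using that(1,2) \<open>\<And>k. j \<le> k \<Longrightarrow> k < NN \<Longrightarrow> rho SA m' \<le> rr SB k + \<delta>\<close> by force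
      show "rho SA m' - \<delta> \<le> CF SB (2*R*(b+1) - 1)" if "m' div nn SA \<le> b" "b < L" for b
        using rhoc[OF ml] CF_mono[OF idx_mono[OF that(1)], of SB] by linarith
      show "rho SA m' - \<delta> \<le> CF SB (NN - 1)"
        using rhoc[OF ml] CFidx[OF ml] by linarith
    qed
    then show ?thesis unfolding Bd_def by linarith
  qed
  have Q: "t0 SA j + RA j + (\<Sum>i\<in>{m0 SA j..<tot SA}. dur SA i) \<le> Bd" if "j \<le> NN" for j
    using that
  proof (induction j)
    case 0
    have "0 + RA 0 + (\<Sum>i\<in>{0..<tot SA}. dur SA i) \<le> iter SB"
      by (rule Wcmp[OF SA SB]) (auto simp: rr_nonneg CF_nonneg)
    then show ?case unfolding Bd_def using dpos by (simp add: t0_def m0_def)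
  next
    case (Suc n)
    then have n: "n < NN" by simp
    have IH: "t0 SA n + RA n + (\<Sum>i\<in>{m0 SA n..<tot SA}. dur SA i) \<le> Bd" using Suc by simp
    have fu: "fst (FL SA n) + RA n + (\<Sum>i\<in>{snd (FL SA n)..<tot SA}. dur SA i) \<le> Bd"
    proof (rule fill_up[where rel="rho SA" and avail="av SA n" and dur="dur SA" and tot="tot SA"
          and t="t0 SA n" and m="m0 SA n" and r="rr SA n"])
      show "fill (rho SA) (av SA n) (dur SA) (tot SA) (t0 SA n) (m0 SA n) (rr SA n) = (fst (FL SA n), snd (FL SA n))"
        unfolding FL_def by simp
      show "t0 SA n + RA n + (\<Sum>i\<in>{m0 SA n..<tot SA}. dur SA i) \<le> Bd" by (rule IH)
      show "rho SA m' + RA n + (\<Sum>i\<in>{m'..<tot SA}. dur SA i) \<le> Bd"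
        if "m0 SA n \<le> m'" "m' < tot SA" "av SA n m'" "rho SA m' < rr SA n" for m'
      proof (rule chunk_hyp[OF that(2)])
        fix k assume "n \<le> k" "k < NN"
        then show "rho SA m' \<le> rr SB k + \<delta>" using that(4) rrc[OF n] rr_mono[OF \<open>n \<le> k\<close>, of SB] by linarith
      qed
      show "rr SA n + RA n + (\<Sum>i\<in>{m'..<tot SA}. dur SA i) \<le> Bd"
        if "m0 SA n \<le> m'" "tot SA \<le> m' \<or> \<not> av SA n m' \<or> rr SA n \<le> rho SA m'" for m'
      proof -
        have "rr SA n - \<delta> + RA n + (\<Sum>i\<in>{m'..<tot SA}. dur SA i) \<le> iter SB"
        proof (rule Wcmp[OF SA SB])
          show "rr SA n - \<delta> \<le> rr SB k" if "n \<le> k" "k < NN" for k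
            using rrc[OF n] rr_mono[OF that(1), of SB] by linarith
          show "rr SA n - \<delta> \<le> CF SB (2*R*(b+1) - 1)" if b: "m' div nn SA \<le> b" "b < L" for b
          proof -
            have ml: "m' div nn SA < L" using b by linarith
            have mt: "m' < tot SA" using divL[OF ml] .
            consider "\<not> av SA n m'" | "rr SA n \<le> rho SA m'" using \<open>tot SA \<le> m' \<or> \<not> av SA n m' \<or> rr SA n \<le> rho SA m'\<close> mt by linarith
            then show ?thesis
            proof cases
              case 1
              then have i1: "n \<le> 2*R*(m' div nn SA + 1) - 1" unfolding av_def by simp
              have "rr SB n \<le> CF SB (2*R*(b+1) - 1)"
              proof (cases "n < R")
                case True then show ?thesis by (simp add: rr_def CF_nonneg)
              next
                case False
                have "n - R \<le> 2*R*(b+1) - 1" using i1 idx_mono[OF b(1)] by linarith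
                then show ?thesis using False by (simp add: rr_def CF_mono)
              qed
              then show ?thesis using rrc[OF n] by linarith
            next
              case 2
              then show ?thesis using rhoc[OF ml] CF_mono[OF idx_mono[OF b(1)], of SB] by linarith
            qed
          qed
          show "rr SA n - \<delta> \<le> CF SB (NN - 1)" using rrc[OF n] rr_le_CF[OF n, of SB] by linarith
        qed
        then show ?thesis unfolding Bd_def by linarith
      qed
    qed
    have sp: "RA n = a2a n + RA (Suc n)" unfolding RA_def using n by (simp add: sum.atLeast_Suc_lessThan)
    have "t0 SA (Suc n) = fst (FL SA n) + a2a n" "m0 SA (Suc n) = snd (FL SA n)"
      using t0_Suc m0_Suc AF_eq MC_eq by auto
    then show ?case using fu sp by simp
  qed
  have QN: "AF SA (NN - 1) + (\<Sum>i\<in>{MC SA (NN - 1)..<tot SA}. dur SA i) \<le> Bd"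
  proof -
    have "t0 SA NN = AF SA (NN - 1)" "m0 SA NN = MC SA (NN - 1)" "RA NN = 0"
      using NN_pos by (auto simp: t0_def m0_def RA_def)
    then show ?thesis using Q[of NN] by simp
  qed
  have F: "fin SA \<le> Bd"
    unfolding fin_def
  proof (rule drain_up[OF QN])
    fix m' assume "MC SA (NN - 1) \<le> m'" "m' < tot SA"
    have "rho SA m' + RA NN + (\<Sum>i\<in>{m'..<tot SA}. dur SA i) \<le> Bd"
      by (rule chunk_hyp[OF \<open>m' < tot SA\<close>]) auto
    then show "rho SA m' + (\<Sum>i\<in>{m'..<tot SA}. dur SA i) \<le> Bd" by (simp add: RA_def)
  qed
  have C: "CF SA (NN - 1) \<le> Bd" using cmpk[of "NN - 1"] NN_pos unfolding Bd_def iter_def by force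
  show ?thesis using F C unfolding iter_def[of SA] Bd_def \<delta>_def by simp
qed

end



theorem theorem2:
  fixes L R :: nat and tAT tE tD tC beta M :: real
  assumes "L \<ge> 1" and "R \<ge> 1"
    and "tAT > 0" and "tE > 0" and "tD > 0" and "tC > 0"
    and "beta > 0" and "M > 0"
  shows "\<exists>T0. ((\<lambda>S. iter_time L R tAT tE tD tC beta M S) \<longlongrightarrow> T0) (at_right 0)
            \<and> (\<forall>S > 0. T0 \<le> iter_time L R tAT tE tD tC beta M S)"
proof -
  interpret sched L R tAT tE tD tC beta M using assms by unfold_locales
  define f where "f S = iter_time L R tAT tE tD tC beta M S" for S
  define c where "c = real NN * beta"
  have up: "f S \<le> f S' + c * S" if "S > 0" "S' > 0" for S S'
    unfolding f_def iter_eq c_def using A_up[OF that] by (simp add: mult.assoc)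
  define I where "I = Inf (f ` {0<..})"
  have bdd: "bdd_below (f ` {0<..})"
  proof (rule bdd_belowI)
    fix x assume "x \<in> f ` {0<..}"
    then obtain S where "S > 0" "x = f S" by auto
    then show "f 1 - c \<le> x" using up[of 1 S] by simp
  qed
  have ge: "I \<le> f S" if "S > 0" for S
    unfolding I_def using that bdd by (intro cInf_lower) auto
  have le: "f S \<le> I + c * S" if "S > 0" for S
  proof -
    have "f S - c * S \<le> I" unfolding I_def
    proof (rule cInf_greatest)
      show "f ` {0<..} \<noteq> {}" by auto
      fix x assume "x \<in> f ` {0<..}"
      then obtain S' where "S' > 0" "x = f S'" by auto
      then show "f S - c * S \<le> x" using up[OF that \<open>S' > 0\<close>] by simp
    qed
    then show ?thesis by simp
  qed
  have ev: "eventually (\<lambda>S. S > 0) (at_right (0::real))" by (rule eventually_at_right_less)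
  have lim1: "((\<lambda>S. I) \<longlongrightarrow> I) (at_right (0::real))" by simp
  have "((\<lambda>S. I + c * S) \<longlongrightarrow> I + c * 0) (at_right (0::real))"
    by (intro tendsto_intros)
  then have lim2: "((\<lambda>S. I + c * S) \<longlongrightarrow> I) (at_right (0::real))" by simp
  have "(f \<longlongrightarrow> I) (at_right 0)"
    by (rule tendsto_sandwich[OF eventually_mono[OF ev ge] eventually_mono[OF ev le] lim1 lim2])
  then show ?thesis using ge unfolding f_def by (intro exI[of _ I]) auto
qed


end
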